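(* For $\alpha\in\mathbb N$ and $n\ge 0$, $$\det\left(1/F_{\alpha+i+j}\right)_{0\le i,j\le n}=\left((-1)^{\alpha\binom{n+1}{2}}F_\alpha\prod_{k=1}^nF_{\alpha+2k}\binom{\alpha+2k-1}{k}_{\mathbb F}^2\right)^{-1},$$ which is the reciprocal of an integer.
   Context: $F_n$ are the Fibonacci numbers ($F_0=0,F_1=1,F_{n+1}=F_n+F_{n-1}$). The Fibonomial coefficients are $\binom{n}{k}_{\mathbb F}=\prod_{i=1}^k F_{n-i+1}/F_i$ for $0\le k\le n$ (empty product $=1$). *)

theory Defs
  imports "HOL-Number_Theory.Fib" "Jordan_Normal_Form.Determinant"
begin

definition fibonomial :: "nat \<Rightarrow> nat \<Rightarrow> real" where
  "fibonomial n k = (\<Prod>i=1..k. real (fib (n - i + 1)) / real (fib i))"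

end

theory Submission
  imports Defs
begin

lemma det_diag_real:
  fixes a :: "nat \<Rightarrow> real"
  shows "det (mat n n (\<lambda>(i,j). if i = j then a i else 0)) = (\<Prod>i<n. a i)"
proof -
  have "det (mat n n (\<lambda>(i,j). if i = j then a i else 0)) = prod_list (diag_mat (mat n n (\<lambda>(i,j). if i = j then a i else 0)))"
    by (rule det_upper_triangular[of _ n]) (auto simp: upper_triangular_def)
  also have "\<dots> = (\<Prod>i<n. a i)" by (simp add: prod_list_diag_prod atLeast0LessThan)
  finally show ?thesis .
qed

lemma det_scale:
  fixes a b :: "nat \<Rightarrow> real" and f :: "nat \<Rightarrow> nat \<Rightarrow> real"
  shows "det (mat n n (\<lambda>(i,j). a i * b j * f i j)) = (\<Prod>i<n. a i) * (\<Prod>j<n. b j) * det (mat n n (\<lambda>(i,j). f i j))"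
proof -
  let ?Da = "mat n n (\<lambda>(i,j). if i = j then a i else 0)"
  let ?Db = "mat n n (\<lambda>(i,j). if i = j then b i else 0)"
  let ?F = "mat n n (\<lambda>(i,j). f i j)"
  have eq: "mat n n (\<lambda>(i,j). a i * b j * f i j) = ?Da * ?F * ?Db"
  proof (rule eq_matI)
    fix i j assume ij: "i < dim_row (?Da * ?F * ?Db)" "j < dim_col (?Da * ?F * ?Db)"
    hence i: "i < n" and j: "j < n" by auto
    have "(?Da * ?F * ?Db) $$ (i,j) = (\<Sum>k<n. (?Da * ?F) $$ (i,k) * (if k = j then b k else 0))"
      using i j by (simp add: scalar_prod_def atLeast0LessThan)
    also have "\<dots> = (?Da * ?F) $$ (i,j) * b j"
      by (simp add: if_distrib j cong: if_cong)
    also have "(?Da * ?F) $$ (i,j) = (\<Sum>k<n. (if i = k then a i else 0) * f k j)"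
      using i j by (simp add: scalar_prod_def atLeast0LessThan)
    also have "\<dots> = (\<Sum>k<n. if k = i then a i * f i j else 0)" by (rule sum.cong) auto
    also have "\<dots> = a i * f i j" using i by simp
    finally show "mat n n (\<lambda>(i,j). a i * b j * f i j) $$ (i,j) = (?Da * ?F * ?Db) $$ (i,j)"
      using i j by simp
  qed auto
  have "det (?Da * ?F * ?Db) = det (?Da * ?F) * det ?Db"
    by (rule det_mult[of _ n]) auto
  also have "det (?Da * ?F) = det ?Da * det ?F" by (rule det_mult[of _ n]) auto
  finally show ?thesis unfolding eq det_diag_real by simp
qed

lemma det_rowop:
  fixes K :: "real mat"
  assumes K: "K \<in> carrier_mat (Suc N) (Suc N)"
  shows "det (mat (Suc N) (Suc N) (\<lambda>(i,j). K $$ (i,j) + (if i < N then K $$ (N,j) else 0))) = det K"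
proof -
  let ?L = "mat (Suc N) (Suc N) (\<lambda>(i,j). if i = j then 1 else if j = N then 1 else (0::real))"
  have eq: "mat (Suc N) (Suc N) (\<lambda>(i,j). K $$ (i,j) + (if i < N then K $$ (N,j) else 0)) = ?L * K"
  proof (rule eq_matI)
    fix i j assume ij: "i < dim_row (?L * K)" "j < dim_col (?L * K)"
    hence i: "i < Suc N" and j: "j < Suc N" using K by auto
    have "(?L * K) $$ (i,j) = (\<Sum>k<Suc N. (if i = k then 1 else if k = N then 1 else 0) * K $$ (k,j))"
      using i j K by (simp add: scalar_prod_def atLeast0LessThan)
    also have "\<dots> = (\<Sum>k<Suc N. (if i = k then K $$ (k,j) else 0) + (if k = N \<and> i \<noteq> N then K $$ (k,j) else 0))"
      by (rule sum.cong) auto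
    also have "\<dots> = K $$ (i,j) + (if i < N then K $$ (N,j) else 0)"
      using i by (cases "i = N") (simp_all add: sum.distrib)
    finally show "mat (Suc N) (Suc N) (\<lambda>(i,j). K $$ (i,j) + (if i < N then K $$ (N,j) else 0)) $$ (i,j) = (?L * K) $$ (i,j)"
      using i j by simp
  qed (use K in auto)
  have dL: "det ?L = 1"
  proof -
    have "det ?L = prod_list (diag_mat ?L)"
      by (rule det_upper_triangular[of _ "Suc N"]) (auto simp: upper_triangular_def)
    also have "\<dots> = 1" by (simp add: prod_list_diag_prod)
    finally show ?thesis .
  qed
  have "det (?L * K) = det ?L * det K" by (rule det_mult[of _ "Suc N"]) (use K in auto)
  then show ?thesis unfolding eq using dL by simp
qed

lemma det_colop:
  fixes K :: "real mat"
  assumes K: "K \<in> carrier_mat (Suc N) (Suc N)"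
  shows "det (mat (Suc N) (Suc N) (\<lambda>(i,j). K $$ (i,j) + (if j < N then K $$ (i,N) else 0))) = det K"
proof -
  let ?R = "mat (Suc N) (Suc N) (\<lambda>(i,j). if i = j then 1 else if i = N then 1 else (0::real))"
  have eq: "mat (Suc N) (Suc N) (\<lambda>(i,j). K $$ (i,j) + (if j < N then K $$ (i,N) else 0)) = K * ?R"
  proof (rule eq_matI)
    fix i j assume ij: "i < dim_row (K * ?R)" "j < dim_col (K * ?R)"
    hence i: "i < Suc N" and j: "j < Suc N" using K by auto
    have "(K * ?R) $$ (i,j) = (\<Sum>k<Suc N. K $$ (i,k) * (if k = j then 1 else if k = N then 1 else 0))"
      using i j K by (simp add: scalar_prod_def atLeast0LessThan)
    also have "\<dots> = (\<Sum>k<Suc N. (if k = j then K $$ (i,k) else 0) + (if k = N \<and> j \<noteq> N then K $$ (i,k) else 0))"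
      by (rule sum.cong) auto
    also have "\<dots> = K $$ (i,j) + (if j < N then K $$ (i,N) else 0)"
      using j by (cases "j = N") (simp_all add: sum.distrib)
    finally show "mat (Suc N) (Suc N) (\<lambda>(i,j). K $$ (i,j) + (if j < N then K $$ (i,N) else 0)) $$ (i,j) = (K * ?R) $$ (i,j)"
      using i j by simp
  qed (use K in auto)
  have dR: "det ?R = 1"
  proof -
    have "det ?R = prod_list (diag_mat ?R)"
      by (rule det_lower_triangular[of "Suc N"]) auto
    also have "\<dots> = 1" by (simp add: prod_list_diag_prod)
    finally show ?thesis .
  qed
  have "det (K * ?R) = det K * det ?R" by (rule det_mult[of _ "Suc N"]) (use K in auto)
  then show ?thesis unfolding eq using dR by simp
qed

lemma det_lastrow:
  fixes K :: "real mat"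
  assumes K: "K \<in> carrier_mat (Suc N) (Suc N)"
    and z: "\<And>j. j < N \<Longrightarrow> K $$ (N,j) = 0" and o: "K $$ (N,N) = 1"
  shows "det K = det (mat N N (\<lambda>(i,j). K $$ (i,j)))"
proof -
  have "det K = (\<Sum>j<Suc N. K $$ (N,j) * cofactor K N j)"
    by (rule laplace_expansion_row[OF K]) simp
  also have "\<dots> = cofactor K N N" using z o by (simp add: lessThan_Suc)
  also have "\<dots> = det (mat_delete K N N)" by (simp add: cofactor_def)
  also have "mat_delete K N N = mat N N (\<lambda>(i,j). K $$ (i,j))"
    using K by (intro eq_matI) (auto simp: mat_delete_def)
  finally show ?thesis .
qed

lemma alg1:
  fixes a b c :: real
  assumes "a \<noteq> c" "b \<noteq> c"
  shows "(b - a) / ((a - c) * (b - c)) + 1 / (b - c) = 1 / (a - c)"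
proof -
  have g: "(v - u) / (u * v) + 1 / v = 1 / u" if "u \<noteq> 0" "v \<noteq> 0" for u v :: real
    using that by (simp add: field_simps)
  have "b - a = (b - c) - (a - c)" by simp
  then show ?thesis using g[of "a - c" "b - c"] assms by simp
qed

lemma alg2:
  fixes a b c :: real
  assumes "c \<noteq> a" "c \<noteq> b"
  shows "(a - b) / ((c - a) * (c - b)) + 1 / (c - b) = 1 / (c - a)"
proof -
  have g: "(v - u) / (u * v) + 1 / v = 1 / u" if "u \<noteq> 0" "v \<noteq> 0" for u v :: real
    using that by (simp add: field_simps)
  have "a - b = (c - b) - (c - a)" by simp
  then show ?thesis using g[of "c - a" "c - b"] assms by simp
qed

lemma cauchy_step:
  fixes x y :: "nat \<Rightarrow> real"
  assumes ne: "\<And>i j. i \<le> N \<Longrightarrow> j \<le> N \<Longrightarrow> x i \<noteq> y j"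
  shows "det (mat (Suc N) (Suc N) (\<lambda>(i,j). 1 / (x i - y j)))
       = det (mat N N (\<lambda>(i,j). 1 / (x i - y j))) * (\<Prod>i<N. x N - x i) * (\<Prod>i<N. y i - y N)
         / ((\<Prod>i<N. x i - y N) * (\<Prod>i<N. x N - y i) * (x N - y N))"
proof -
  define K where "K = mat (Suc N) (Suc N) (\<lambda>(i,j). if i < N then (x N - x i) / ((x i - y j) * (x N - y j)) else 1 / (x N - y j))"
  have K: "K \<in> carrier_mat (Suc N) (Suc N)" by (simp add: K_def)
  have A_eq: "mat (Suc N) (Suc N) (\<lambda>(i,j). 1 / (x i - y j)) = mat (Suc N) (Suc N) (\<lambda>(i,j). K $$ (i,j) + (if i < N then K $$ (N,j) else 0))"
    (is "?A = ?B")
  proof (rule eq_matI)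
    fix i j assume "i < dim_row ?B" "j < dim_col ?B"
    hence i: "i < Suc N" and j: "j < Suc N" by auto
    show "?A $$ (i,j) = ?B $$ (i,j)"
    proof (cases "i < N")
      case True
      have "x i \<noteq> y j" "x N \<noteq> y j" using ne i j by auto
      then show ?thesis using i j True by (simp add: K_def alg1)
    next
      case False
      then have "i = N" using i by auto
      then show ?thesis using i j by (simp add: K_def)
    qed
  qed auto
  define a where "a = (\<lambda>i. if i < N then x N - x i else 1)"
  define b where "b = (\<lambda>j. 1 / (x N - y j))"
  define Bf where "Bf = (\<lambda>i j. if i < N then 1 / (x i - y j) else (1::real))"
  have K_eq: "K = mat (Suc N) (Suc N) (\<lambda>(i,j). a i * b j * Bf i j)"
    by (rule eq_matI) (auto simp: K_def a_def b_def Bf_def)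
  define G' where "G' = mat (Suc N) (Suc N) (\<lambda>(i,j). if j < N then (if i < N then (y j - y N) / ((x i - y j) * (x i - y N)) else 0)
       else (if i < N then 1 / (x i - y N) else 1))"
  have G': "G' \<in> carrier_mat (Suc N) (Suc N)" by (simp add: G'_def)
  have B_eq: "mat (Suc N) (Suc N) (\<lambda>(i,j). Bf i j) = mat (Suc N) (Suc N) (\<lambda>(i,j). G' $$ (i,j) + (if j < N then G' $$ (i,N) else 0))"
    (is "?A = ?B")
  proof (rule eq_matI)
    fix i j assume "i < dim_row ?B" "j < dim_col ?B"
    hence i: "i < Suc N" and j: "j < Suc N" by auto
    show "?A $$ (i,j) = ?B $$ (i,j)"
    proof (cases "i < N \<and> j < N")
      case True
      have "x i \<noteq> y j" "x i \<noteq> y N" using ne i j by auto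
      then show ?thesis using i j True by (simp add: G'_def Bf_def alg2)
    next
      case False
      then show ?thesis using i j by (auto simp: G'_def Bf_def less_Suc_eq)
    qed
  qed auto
  define c where "c = (\<lambda>i. if i < N then 1 / (x i - y N) else 1)"
  define d where "d = (\<lambda>j. if j < N then y j - y N else 1)"
  define Gf where "Gf = (\<lambda>i j. if i < N \<and> j < N then 1 / (x i - y j) else if i < N then 1 else if j < N then 0 else (1::real))"
  have G'_eq: "G' = mat (Suc N) (Suc N) (\<lambda>(i,j). c i * d j * Gf i j)"
    by (rule eq_matI) (auto simp: G'_def c_def d_def Gf_def less_Suc_eq)
  have dG: "det (mat (Suc N) (Suc N) (\<lambda>(i,j). Gf i j)) = det (mat N N (\<lambda>(i,j). 1 / (x i - y j)))"
  proof -
    have "det (mat (Suc N) (Suc N) (\<lambda>(i,j). Gf i j)) = det (mat N N (\<lambda>(i,j). mat (Suc N) (Suc N) (\<lambda>(i,j). Gf i j) $$ (i,j)))"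
      by (rule det_lastrow) (auto simp: Gf_def)
    also have "mat N N (\<lambda>(i,j). mat (Suc N) (Suc N) (\<lambda>(i,j). Gf i j) $$ (i,j)) = mat N N (\<lambda>(i,j). 1 / (x i - y j))"
      by (rule eq_matI) (auto simp: Gf_def)
    finally show ?thesis .
  qed
  have eq1: "det (mat (Suc N) (Suc N) (\<lambda>(i,j). 1 / (x i - y j)))
     = (\<Prod>i<Suc N. a i) * (\<Prod>j<Suc N. b j) * ((\<Prod>i<Suc N. c i) * (\<Prod>j<Suc N. d j) * det (mat N N (\<lambda>(i,j). 1 / (x i - y j))))"
  proof -
    have "det (mat (Suc N) (Suc N) (\<lambda>(i,j). 1 / (x i - y j))) = det K"
      unfolding A_eq by (rule det_rowop[OF K])
    also have "\<dots> = (\<Prod>i<Suc N. a i) * (\<Prod>j<Suc N. b j) * det (mat (Suc N) (Suc N) (\<lambda>(i,j). Bf i j))"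
      unfolding K_eq by (rule det_scale)
    also have "det (mat (Suc N) (Suc N) (\<lambda>(i,j). Bf i j)) = det G'"
      unfolding B_eq by (rule det_colop[OF G'])
    also have "\<dots> = (\<Prod>i<Suc N. c i) * (\<Prod>j<Suc N. d j) * det (mat (Suc N) (Suc N) (\<lambda>(i,j). Gf i j))"
      unfolding G'_eq by (rule det_scale)
    finally show ?thesis unfolding dG .
  qed
  have pa: "(\<Prod>i<Suc N. a i) = (\<Prod>i<N. x N - x i)" by (simp add: a_def)
  have pb: "(\<Prod>j<Suc N. b j) = 1 / (\<Prod>i<N. x N - y i) / (x N - y N)" by (simp add: b_def prod_dividef)
  have pc: "(\<Prod>i<Suc N. c i) = 1 / (\<Prod>i<N. x i - y N)" by (simp add: c_def prod_dividef)
  have pd: "(\<Prod>j<Suc N. d j) = (\<Prod>i<N. y i - y N)" by (simp add: d_def)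
  show ?thesis unfolding eq1 pa pb pc pd by (simp add: mult.commute mult.left_commute mult.assoc)
qed

lemma fibonomial_0 [simp]: "fibonomial n 0 = 1"
  by (simp add: fibonomial_def)

lemma fibonomial_Suc_Suc:
  "fibonomial (Suc n) (Suc k) = fibonomial n k * real (fib (Suc n)) / real (fib (Suc k))"
proof -
  have num: "(\<Prod>i=1..Suc k. real (fib (Suc n - i + 1))) = real (fib (Suc n)) * (\<Prod>i=1..k. real (fib (n - i + 1)))"
  proof -
    have "(\<Prod>i=1..Suc k. real (fib (Suc n - i + 1))) = real (fib (Suc n - 1 + 1)) * (\<Prod>i=Suc 1..Suc k. real (fib (Suc n - i + 1)))"
      by (rule prod.atLeast_Suc_atMost) simp
    also have "(\<Prod>i=Suc 1..Suc k. real (fib (Suc n - i + 1))) = (\<Prod>i=1..k. real (fib (Suc n - Suc i + 1)))"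
      by (rule prod.shift_bounds_cl_Suc_ivl)
    finally show ?thesis by simp
  qed
  have den: "(\<Prod>i=1..Suc k. real (fib i)) = (\<Prod>i=1..k. real (fib i)) * real (fib (Suc k))"
    by (simp add: prod.cl_ivl_Suc)
  show ?thesis unfolding fibonomial_def prod_dividef num den by simp
qed

lemma fibonomial_Suc_right:
  assumes "k < n"
  shows "fibonomial n (Suc k) = fibonomial n k * real (fib (n - k)) / real (fib (Suc k))"
proof -
  have "fibonomial n (Suc k) = fibonomial n k * (real (fib (n - Suc k + 1)) / real (fib (Suc k)))"
    by (simp add: fibonomial_def prod.cl_ivl_Suc)
  moreover have "n - Suc k + 1 = n - k" using assms by simp
  ultimately show ?thesis by simp
qed

lemma fib_pos_real: "n > 0 \<Longrightarrow> real (fib n) > 0"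
  using fib_neq_0_nat by simp

lemma alg3:
  fixes A f a b g :: real
  assumes "f \<noteq> 0"
  shows "A * (g * a + b * f) / f = g * (A * a / f) + b * A"
  using assms by (simp add: field_simps)

lemma fibonomial_Ints: "k \<le> n \<Longrightarrow> fibonomial n k \<in> \<int>"
proof (induction n arbitrary: k)
  case 0
  then show ?case by simp
next
  case (Suc n)
  show ?case
  proof (cases k)
    case 0
    then show ?thesis by simp
  next
    case (Suc k')
    show ?thesis
    proof (cases "k' = n")
      case True
      have "fibonomial (Suc n) (Suc n) = fibonomial n n"
        using fib_pos_real[of "Suc n"] by (simp add: fibonomial_Suc_Suc)
      then show ?thesis using Suc.IH[of n] True Suc by simp
    next
      case False
      then have kn: "k' < n" using Suc Suc.prems by simp
      then obtain d where nd: "n = k' + Suc d" using less_imp_Suc_add[OF kn] by auto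
      have fa: "fib (Suc (Suc k' + d)) = fib (Suc d) * fib (Suc (Suc k')) + fib d * fib (Suc k')"
        by (rule fib_add)
      have fr: "real (fib (Suc n)) = real (fib (Suc (Suc k'))) * real (fib (n - k')) + real (fib (n - k' - 1)) * real (fib (Suc k'))"
      proof -
        have "Suc n = Suc (Suc k' + d)" "n - k' = Suc d" "n - k' - 1 = d" using nd by auto
        then show ?thesis using fa by (simp add: ac_simps)
      qed
      have pos: "real (fib (Suc k')) \<noteq> 0" using fib_pos_real[of "Suc k'"] by simp
      have rec: "fibonomial (Suc n) (Suc k') = real (fib (Suc (Suc k'))) * fibonomial n (Suc k') + real (fib (n - k' - 1)) * fibonomial n k'"
        unfolding fibonomial_Suc_Suc fibonomial_Suc_right[OF kn] fr using pos
        by (rule alg3)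
      have "fibonomial n (Suc k') \<in> \<int>" "fibonomial n k' \<in> \<int>" using Suc.IH kn by auto
      then show ?thesis unfolding Suc rec by (intro Ints_add Ints_mult) auto
    qed
  qed
qed

lemma fibonomial_pos: "k \<le> n \<Longrightarrow> fibonomial n k > 0"
  unfolding fibonomial_def by (intro prod_pos divide_pos_pos fib_pos_real) auto

lemma fibonomial_reindex:
  "fibonomial (a + 2 * m - 1) m = (\<Prod>i<m. real (fib (a + m + i)) / real (fib (m - i)))"
  unfolding fibonomial_def
proof (rule prod.reindex_bij_witness[of _ "\<lambda>i. m - i" "\<lambda>k. m - k"])
  fix k assume "k \<in> {1..m}"
  then show "real (fib (a + m + (m - k))) / real (fib (m - (m - k))) = real (fib (a + 2 * m - 1 - k + 1)) / real (fib k)"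
  proof -
    have "a + m + (m - k) = a + 2 * m - 1 - k + 1" "m - (m - k) = k" using \<open>k \<in> {1..m}\<close> by auto
    then show ?thesis by simp
  qed
qed auto

lemma alg4:
  fixes A a B b C P1 P2 P3 P4 X :: real
  shows "(A * a) * (B * b) * (C * P1 * P2 / (P3 * P4 * X)) = (A * B * C) * (a * b / X) * (P1 * P2 / (P3 * P4))"
  by (simp add: divide_inverse inverse_mult_distrib mult_ac)

lemma alg5:
  fixes D F f c :: real
  shows "x = D * (1 / F) * (c * (1 / f) ^ 2) \<Longrightarrow> x = D * (c / (F * f ^ 2))"
  by (simp add: divide_inverse inverse_mult_distrib power2_eq_square mult_ac)

lemma neg1_pow_sq: "(-1::real) ^ k * (-1) ^ k = 1"
  by (induct k) auto

context
  fixes \<phi> \<psi> s :: real and \<alpha> :: nat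
  assumes binet: "\<And>n. real (fib n) = (\<phi> ^ n - \<psi> ^ n) / s"
    and pq: "\<phi> * \<psi> = -1" and s0: "s \<noteq> 0" and a1: "\<alpha> \<ge> 1"
begin

lemma phi0: "\<phi> \<noteq> 0" using pq by auto
lemma psi0: "\<psi> \<noteq> 0" using pq by auto

definition xx :: "nat \<Rightarrow> real" where "xx i = \<phi> ^ (\<alpha> + i) / \<psi> ^ i"
definition yy :: "nat \<Rightarrow> real" where "yy j = \<psi> ^ (\<alpha> + j) / \<phi> ^ j"

lemma fibF: "\<phi> ^ n - \<psi> ^ n = s * real (fib n)"
  using binet[of n] s0 by (simp add: field_simps)

lemma xy_diff: "xx i - yy j = s * real (fib (\<alpha> + i + j)) / (\<phi> ^ j * \<psi> ^ i)"
proof -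
  have e1: "\<phi> ^ (\<alpha> + i + j) = \<phi> ^ (\<alpha> + i) * \<phi> ^ j" by (simp add: power_add)
  have e2: "\<psi> ^ (\<alpha> + i + j) = \<psi> ^ (\<alpha> + j) * \<psi> ^ i" by (simp add: power_add[symmetric] ac_simps)
  have "xx i - yy j = (\<phi> ^ (\<alpha> + i + j) - \<psi> ^ (\<alpha> + i + j)) / (\<phi> ^ j * \<psi> ^ i)"
    unfolding xx_def yy_def e1 e2 using phi0 psi0 by (simp add: field_simps)
  then show ?thesis unfolding fibF .
qed

lemma fibpos: "real (fib (\<alpha> + i + j)) \<noteq> 0"
  using fib_pos_real[of "\<alpha> + i + j"] a1 by simp

lemma xy_ne: "xx i \<noteq> yy j"
proof -
  have "xx i - yy j \<noteq> 0" unfolding xy_diff using s0 fibpos phi0 psi0 by simp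
  then show ?thesis by simp
qed

lemma entry: "1 / real (fib (\<alpha> + i + j)) = (s / \<psi> ^ i) * (1 / \<phi> ^ j) * (1 / (xx i - yy j))"
  unfolding xy_diff using s0 fibpos[of i j] phi0 psi0 by (simp add: field_simps)

definition Dm :: "nat \<Rightarrow> real" where
  "Dm n = det (mat (Suc n) (Suc n) (\<lambda>(i, j). 1 / real (fib (\<alpha> + i + j))))"
definition Cd :: "nat \<Rightarrow> real" where
  "Cd m = det (mat m m (\<lambda>(i,j). 1 / (xx i - yy j)))"

lemma Dm_Cd: "Dm n = (\<Prod>i<Suc n. s / \<psi> ^ i) * (\<Prod>j<Suc n. 1 / \<phi> ^ j) * Cd (Suc n)"
  unfolding Dm_def Cd_def entry by (rule det_scale)

lemma Cd_step: "Cd (Suc m) = Cd m * (\<Prod>i<m. xx m - xx i) * (\<Prod>i<m. yy i - yy m)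
         / ((\<Prod>i<m. xx i - yy m) * (\<Prod>i<m. xx m - yy i) * (xx m - yy m))"
  unfolding Cd_def by (rule cauchy_step) (simp add: xy_ne)

lemma xx_diff: "xx (i + d) - xx i = \<phi> ^ (\<alpha> + i) * (s * real (fib d)) / \<psi> ^ (i + d)"
proof -
  have "xx (i + d) - xx i = \<phi> ^ (\<alpha> + i) * (\<phi> ^ d - \<psi> ^ d) / \<psi> ^ (i + d)"
    unfolding xx_def using psi0 by (simp add: field_simps power_add)
  then show ?thesis unfolding fibF .
qed

lemma yy_diff: "yy i - yy (i + d) = \<psi> ^ (\<alpha> + i) * (s * real (fib d)) / \<phi> ^ (i + d)"
proof -
  have "yy i - yy (i + d) = \<psi> ^ (\<alpha> + i) * (\<phi> ^ d - \<psi> ^ d) / \<phi> ^ (i + d)"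
    unfolding yy_def using phi0 by (simp add: field_simps power_add)
  then show ?thesis unfolding fibF .
qed

lemma factor:
  assumes "i < m"
  shows "(xx m - xx i) * (yy i - yy m) / ((xx i - yy m) * (xx m - yy i))
       = (-1) ^ \<alpha> * (real (fib (m - i)) / real (fib (\<alpha> + m + i))) ^ 2"
proof -
  define d where "d = m - i"
  have m: "m = i + d" using assms d_def by simp
  have f1: "real (fib (\<alpha> + i + m)) = real (fib (\<alpha> + m + i))" by (simp add: ac_simps)
  have F0: "real (fib (\<alpha> + m + i)) \<noteq> 0" using fibpos[of m i] .
  have "(xx m - xx i) * (yy i - yy m) / ((xx i - yy m) * (xx m - yy i))
      = (\<phi> ^ (\<alpha> + i) * (s * real (fib d)) / \<psi> ^ (i + d)) * (\<psi> ^ (\<alpha> + i) * (s * real (fib d)) / \<phi> ^ (i + d))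
        / ((s * real (fib (\<alpha> + m + i)) / (\<phi> ^ m * \<psi> ^ i)) * (s * real (fib (\<alpha> + m + i)) / (\<phi> ^ i * \<psi> ^ m)))"
    unfolding xy_diff f1 using xx_diff[of i d] yy_diff[of i d] m by simp
  also have "\<dots> = (\<phi> * \<psi>) ^ (\<alpha> + i) * (\<phi> * \<psi>) ^ i * (real (fib d) / real (fib (\<alpha> + m + i))) ^ 2"
    unfolding m using s0 F0 phi0 psi0 by (simp add: field_simps power_add power_mult_distrib power2_eq_square m)
  also have "\<dots> = (-1) ^ \<alpha> * (real (fib d) / real (fib (\<alpha> + m + i))) ^ 2"
    unfolding pq by (simp add: power_add neg1_pow_sq mult.assoc[symmetric])
  finally show ?thesis unfolding d_def .
qed

lemma Dm_step:
  "Dm (Suc n) = Dm n * ((-1) ^ (\<alpha> * Suc n) / (real (fib (\<alpha> + 2 * Suc n)) * (fibonomial (\<alpha> + 2 * Suc n - 1) (Suc n))^2))"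
proof -
  define m where "m = Suc n"
  have e: "\<alpha> + m + m = \<alpha> + 2 * m" by simp
  have FF: "real (fib (\<alpha> + 2 * m)) \<noteq> 0" unfolding e[symmetric] by (rule fibpos)
  have xym: "xx m - yy m = s * real (fib (\<alpha> + 2 * m)) / (\<phi> ^ m * \<psi> ^ m)"
    using xy_diff[of m m] unfolding e .
  have r1: "(s / \<psi> ^ m) * (1 / \<phi> ^ m) / (xx m - yy m) = 1 / real (fib (\<alpha> + 2 * m))"
    unfolding xym using s0 phi0 psi0 FF by (simp add: field_simps)
  define q where "q = (\<lambda>i. real (fib (m - i)) / real (fib (\<alpha> + m + i)))"
  have "(\<Prod>i<m. xx m - xx i) * (\<Prod>i<m. yy i - yy m) / ((\<Prod>i<m. xx i - yy m) * (\<Prod>i<m. xx m - yy i))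
      = (\<Prod>i<m. (xx m - xx i) * (yy i - yy m) / ((xx i - yy m) * (xx m - yy i)))"
    by (simp add: prod.distrib prod_dividef)
  also have "\<dots> = (\<Prod>i<m. (-1) ^ \<alpha> * (q i) ^ 2)"
    by (rule prod.cong) (simp_all add: factor q_def)
  also have "\<dots> = (\<Prod>i<m. (-1::real) ^ \<alpha>) * (\<Prod>i<m. (q i) ^ 2)"
    by (rule prod.distrib)
  also have "(\<Prod>i<m. (-1::real) ^ \<alpha>) = (-1) ^ (\<alpha> * m)"
    by (simp add: power_mult)
  also have "(\<Prod>i<m. (q i) ^ 2) = (\<Prod>i<m. q i) ^ 2"
    by (simp add: prod_power_distrib)
  also have "(\<Prod>i<m. q i) = 1 / fibonomial (\<alpha> + 2 * m - 1) m"
    unfolding fibonomial_reindex q_def by (simp add: prod_dividef)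
  finally have r2': "(\<Prod>i<m. xx m - xx i) * (\<Prod>i<m. yy i - yy m) / ((\<Prod>i<m. xx i - yy m) * (\<Prod>i<m. xx m - yy i))
      = (-1) ^ (\<alpha> * m) * (1 / fibonomial (\<alpha> + 2 * m - 1) m) ^ 2" .
  have "Dm m = ((\<Prod>i<m. s / \<psi> ^ i) * (s / \<psi> ^ m)) * ((\<Prod>j<m. 1 / \<phi> ^ j) * (1 / \<phi> ^ m))
       * (Cd m * (\<Prod>i<m. xx m - xx i) * (\<Prod>i<m. yy i - yy m)
         / ((\<Prod>i<m. xx i - yy m) * (\<Prod>i<m. xx m - yy i) * (xx m - yy m)))"
    unfolding Dm_Cd Cd_step m_def by simp
  also have "\<dots> = ((\<Prod>i<m. s / \<psi> ^ i) * (\<Prod>j<m. 1 / \<phi> ^ j) * Cd m)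
      * ((s / \<psi> ^ m) * (1 / \<phi> ^ m) / (xx m - yy m))
      * ((\<Prod>i<m. xx m - xx i) * (\<Prod>i<m. yy i - yy m) / ((\<Prod>i<m. xx i - yy m) * (\<Prod>i<m. xx m - yy i)))"
    by (rule alg4)
  also have "(\<Prod>i<m. s / \<psi> ^ i) * (\<Prod>j<m. 1 / \<phi> ^ j) * Cd m = Dm n"
    unfolding Dm_Cd m_def ..
  finally show ?thesis unfolding r1 r2' m_def[symmetric] by (rule alg5)
qed

lemma Dm_step_det:
  "det (mat (Suc (Suc n)) (Suc (Suc n)) (\<lambda>(i, j). 1 / real (fib (\<alpha> + i + j))))
   = det (mat (Suc n) (Suc n) (\<lambda>(i, j). 1 / real (fib (\<alpha> + i + j))))
     * ((-1) ^ (\<alpha> * Suc n) / (real (fib (\<alpha> + 2 * Suc n)) * (fibonomial (\<alpha> + 2 * Suc n - 1) (Suc n))^2))"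
  using Dm_step[of n] unfolding Dm_def .

end

lemma inv_neg1_pow: "inverse ((-1::real) ^ B) = (-1) ^ B"
  using neg1_pow_sq[of B] by (metis inverse_unique)

lemma alg6:
  fixes f P g :: real
  shows "1 / ((-1) ^ (A + B) * f * (P * g)) = 1 / ((-1) ^ A * f * P) * ((-1) ^ B / g)"
  by (simp add: power_add divide_inverse inverse_mult_distrib inv_neg1_pow mult_ac)

theorem corollary3p3:
  fixes \<alpha> n :: nat
  assumes "\<alpha> \<ge> 1"
  shows "det (mat (Suc n) (Suc n) (\<lambda>(i, j). 1 / real (fib (\<alpha> + i + j))))
           = 1 / ((-1) ^ (\<alpha> * (Suc n choose 2)) * real (fib \<alpha>)
                  * (\<Prod>k=1..n. real (fib (\<alpha> + 2 * k)) * (fibonomial (\<alpha> + 2 * k - 1) k)^2))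
         \<and> (\<exists>m::int. m \<noteq> 0 \<and>
              det (mat (Suc n) (Suc n) (\<lambda>(i, j). 1 / real (fib (\<alpha> + i + j)))) = 1 / of_int m)"
proof -
  define \<phi> :: real where "\<phi> = (1 + sqrt 5) / 2"
  define \<psi> :: real where "\<psi> = (1 - sqrt 5) / 2"
  have binet: "\<And>n. real (fib n) = (\<phi> ^ n - \<psi> ^ n) / sqrt 5"
    unfolding \<phi>_def \<psi>_def by (rule fib_closed_form)
  have "\<phi> * \<psi> = (1 - sqrt 5 * sqrt 5) / 4"
    unfolding \<phi>_def \<psi>_def by (simp add: field_simps)
  then have pq: "\<phi> * \<psi> = -1" by simp
  have s0: "sqrt 5 \<noteq> (0::real)" by simp
  define D where "D n = det (mat (Suc n) (Suc n) (\<lambda>(i, j). 1 / real (fib (\<alpha> + i + j))))" for n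
  define g where "g k = real (fib (\<alpha> + 2 * k)) * (fibonomial (\<alpha> + 2 * k - 1) k)^2" for k
  define R where "R n = 1 / ((-1) ^ (\<alpha> * (Suc n choose 2)) * real (fib \<alpha>) * (\<Prod>k=1..n. g k))" for n
  have step: "D (Suc n) = D n * ((-1) ^ (\<alpha> * Suc n) / g (Suc n))" for n
    using Dm_step_det[OF binet pq s0 assms(1), of n] by (simp only: D_def g_def)
  have main: "D n = R n" for n
  proof (induction n)
    case 0
    have "D 0 = 1 / real (fib \<alpha>)"
      unfolding D_def by (subst det_single) auto
    moreover have "Suc 0 choose 2 = 0" by (rule binomial_eq_0) simp
    ultimately show ?case unfolding R_def by (simp only:) simp
  next
    case (Suc n)
    have c: "Suc (Suc n) choose 2 = (Suc n choose 2) + Suc n" by (simp add: numeral_2_eq_2)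
    have "R (Suc n) = 1 / ((-1) ^ (\<alpha> * (Suc n choose 2) + \<alpha> * Suc n) * real (fib \<alpha>) * ((\<Prod>k=1..n. g k) * g (Suc n)))"
    proof -
      have c': "\<alpha> * (Suc (Suc n) choose 2) = \<alpha> * (Suc n choose 2) + \<alpha> * Suc n"
        unfolding c by (rule distrib_left)
      have p: "(\<Prod>k=1..Suc n. g k) = (\<Prod>k=1..n. g k) * g (Suc n)" by (simp add: prod.cl_ivl_Suc)
      show ?thesis unfolding R_def c' p by (rule refl)
    qed
    also have "\<dots> = R n * ((-1) ^ (\<alpha> * Suc n) / g (Suc n))"
      unfolding R_def by (rule alg6)
    finally show ?case using step Suc.IH by simp
  qed
  have den_int: "(-1) ^ (\<alpha> * (Suc n choose 2)) * real (fib \<alpha>) * (\<Prod>k=1..n. g k) \<in> \<int>"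
  proof -
    have "g k \<in> \<int>" if "k \<in> {1..n}" for k
    proof -
      have "fibonomial (\<alpha> + 2 * k - 1) k \<in> \<int>" using assms by (intro fibonomial_Ints) simp
      then show ?thesis unfolding g_def by (intro Ints_mult Ints_power) auto
    qed
    then show ?thesis by (intro Ints_mult Ints_power Ints_prod) auto
  qed
  have den_nz: "(-1) ^ (\<alpha> * (Suc n choose 2)) * real (fib \<alpha>) * (\<Prod>k=1..n. g k) \<noteq> 0"
  proof -
    have "g k > 0" if "k \<in> {1..n}" for k
    proof -
      have "fibonomial (\<alpha> + 2 * k - 1) k > 0" using assms by (intro fibonomial_pos) simp
      moreover have "real (fib (\<alpha> + 2 * k)) > 0" using assms by (intro fib_pos_real) simp
      ultimately show ?thesis unfolding g_def by simp
    qed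
    then have P: "(\<Prod>k=1..n. g k) > 0" by (intro prod_pos) auto
    have F: "real (fib \<alpha>) > 0" using assms by (intro fib_pos_real) simp
    have S: "(-1::real) ^ (\<alpha> * (Suc n choose 2)) \<noteq> 0" by simp
    show ?thesis using P F S by (metis mult_eq_0_iff less_irrefl)
  qed
  from den_int obtain z where z: "(-1) ^ (\<alpha> * (Suc n choose 2)) * real (fib \<alpha>) * (\<Prod>k=1..n. g k) = of_int z"
    by (elim Ints_cases) auto
  have zn: "z \<noteq> 0" using den_nz z by auto
  have DR: "D n = R n" by (rule main)
  show ?thesis
    using DR zn z unfolding D_def R_def g_def by auto
qed

end
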